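(* A Borel probability measure $\pi$ on $[0,1]$ is a minimax prior if and only if $\int_{[0,1]}\theta\,\pi(d\theta)=1/2$ and $\int_{[0,1]}\theta^2\,\pi(d\theta)=2/5$.
   Context: Bernoulli model: for $\theta\in[0,1]$, $p_\theta(x)=\theta^x(1-\theta)^{1-x}$, $x\in\{0,1\}$. One observes $x\sim p_\theta$ and predicts an independent future $y\sim p_\theta$. A nonrandomized decision is a pair $\delta=(\delta_0,\delta_1)\in\mathcal D=[0,1]^2$, used as the predictive distribution $p_\delta(y\mid x)=\delta_x^{\,y}(1-\delta_x)^{1-y}$. The Kullback–Leibler risk is $R_\delta(\theta)=-S(\theta)+\theta^2\log\frac1{\delta_1}+\theta(1-\theta)\log\frac1{1-\delta_1}+\theta(1-\theta)\log\frac1{\delta_0}+(1-\theta)^2\log\frac1{1-\delta_0}\in[0,+\infty]$, where $S(\theta)=-\theta\log\theta-(1-\theta)\log(1-\theta)$ is the binary entropy, with conventions $0\log 0=0$, $\log(1/0)=+\infty$, $0\cdot(+\infty)=0$. A decision is minimax if it minimizes $\sup_{\theta\in[0,1]}R_\delta(\theta)$ over $\mathcal D$. A prior is a Borel probability measure $\pi$ on $[0,1]$; a decision $\delta$ is Bayes with respect to $\pi$ if it minimizes $\int_{[0,1]}R_\delta(\theta)\,\pi(d\theta)$ over $\mathcal D$. A prior $\pi$ is called a minimax prior if a Bayes decision with respect to $\pi$ is minimax. *)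

theory Defs
  imports "HOL-Probability.Probability"
begin

definition xlog :: "real \<Rightarrow> real \<Rightarrow> ereal" where
  "xlog c d = (if c = 0 then 0 else if d = 0 then \<infinity> else ereal (c * ln (1 / d)))"

definition plogp :: "real \<Rightarrow> real" where
  "plogp x = (if x = 0 then 0 else x * ln x)"

definition bin_entropy :: "real \<Rightarrow> real" where
  "bin_entropy t = - plogp t - plogp (1 - t)"

definition decisions :: "(real \<times> real) set" where
  "decisions = {0..1} \<times> {0..1}"

definition KL_risk :: "real \<times> real \<Rightarrow> real \<Rightarrow> ereal" where
  "KL_risk \<delta> \<theta> = ereal (- bin_entropy \<theta>)
     + xlog (\<theta>\<^sup>2) (snd \<delta>)
     + xlog (\<theta> * (1 - \<theta>)) (1 - snd \<delta>)
     + xlog (\<theta> * (1 - \<theta>)) (fst \<delta>)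
     + xlog ((1 - \<theta>)\<^sup>2) (1 - fst \<delta>)"

definition max_risk :: "real \<times> real \<Rightarrow> ereal" where
  "max_risk \<delta> = (SUP \<theta>\<in>{0..1}. KL_risk \<delta> \<theta>)"

definition is_minimax :: "real \<times> real \<Rightarrow> bool" where
  "is_minimax \<delta> \<longleftrightarrow> \<delta> \<in> decisions \<and> (\<forall>\<delta>'\<in>decisions. max_risk \<delta> \<le> max_risk \<delta>')"

definition bayes_risk :: "real measure \<Rightarrow> real \<times> real \<Rightarrow> ennreal" where
  "bayes_risk \<pi> \<delta> = (\<integral>\<^sup>+ \<theta>. indicator {0..1} \<theta> * e2ennreal (KL_risk \<delta> \<theta>) \<partial>\<pi>)"

definition is_bayes :: "real measure \<Rightarrow> real \<times> real \<Rightarrow> bool" where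
  "is_bayes \<pi> \<delta> \<longleftrightarrow> \<delta> \<in> decisions \<and> (\<forall>\<delta>'\<in>decisions. bayes_risk \<pi> \<delta> \<le> bayes_risk \<pi> \<delta>')"

definition minimax_prior :: "real measure \<Rightarrow> bool" where
  "minimax_prior \<pi> \<longleftrightarrow> (\<exists>\<delta>. is_bayes \<pi> \<delta> \<and> is_minimax \<delta>)"

end

theory Submission
  imports Defs "HOL-Real_Asymp.Real_Asymp"
begin


lemma L_bound:
  fixes x :: real assumes "0 \<le> x" "x < 1"
  shows "ln (1+x) - ln (1-x) \<le> 2*x/(1-x^2)"
proof -
  define h where "h t = 2*t/(1-t^2) - (ln (1+t) - ln (1-t))" for t :: real
  have "h 0 \<le> h x"
  proof (rule DERIV_nonneg_imp_nondecreasing[OF assms(1)])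
    fix t assume t: "0 \<le> t" "t \<le> x"
    then have t1: "t < 1" using assms by simp
    have tt: "t*t < 1" "t^2 < 1" using t t1 abs_square_less_1[of t] by (auto simp: power2_eq_square)
    have d: "(h has_real_derivative (2*(1-t^2) + 2*t*(2*t))/(1-t^2)^2 - (1/(1+t) + 1/(1-t))) (at t)"
      unfolding h_def using t t1 tt
      by (auto intro!: derivative_eq_intros simp: power2_eq_square)
    have "(2*(1-t^2) + 2*t*(2*t))/(1-t^2)^2 - (1/(1+t) + 1/(1-t)) = 4*t^2/(1-t^2)^2"
    proof -
      have n: "1-t^2 \<noteq> 0" "1+t \<noteq> 0" "1-t \<noteq> 0" using tt t t1 by auto
      have e: "1-t^2 = (1+t)*(1-t)" by (simp add: algebra_simps power2_eq_square)
      show ?thesis using n unfolding e by (simp add: divide_simps) (simp add: algebra_simps power2_eq_square)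
    qed
    then show "\<exists>y. (h has_real_derivative y) (at t) \<and> 0 \<le> y" using d by auto
  qed
  then show ?thesis by (simp add: h_def)
qed

lemma inv_sum: fixes t :: real assumes "-1 < t" "t < 1"
  shows "1/(1+t) + 1/(1-t) = 2/(1-t^2)"
proof -
  have e: "1-t^2 = (1+t)*(1-t)" by (simp add: algebra_simps power2_eq_square)
  show ?thesis using assms unfolding e by (simp add: divide_simps)
qed

definition phi :: "real \<Rightarrow> real" where
  "phi t = (1+t)*ln(1+t) + (1-t)*ln(1-t)"

lemma chi_bound:
  fixes x :: real assumes "0 \<le> x" "x < 1"
  shows "2 * phi x \<le> x * (ln (1+x) - ln (1-x))"
proof -
  define h where "h t = t * (ln (1+t) - ln (1-t)) - 2 * phi t" for t :: real
  have "h 0 \<le> h x"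
  proof (rule DERIV_nonneg_imp_nondecreasing[OF assms(1)])
    fix t assume t: "0 \<le> t" "t \<le> x"
    then have t1: "t < 1" using assms by simp
    have n: "1+t \<noteq> 0" "1-t \<noteq> 0" "1+t > 0" "1-t > 0" using t t1 by auto
    have d: "(h has_real_derivative (2*t/(1-t^2) - (ln (1+t) - ln (1-t)))) (at t)"
      unfolding h_def phi_def using n
      by (auto intro!: derivative_eq_intros simp: inv_sum)
    then show "\<exists>y. (h has_real_derivative y) (at t) \<and> 0 \<le> y" using L_bound[OF t(1) t1] by auto
  qed
  then show ?thesis by (simp add: h_def phi_def)
qed

lemma phi_deriv: fixes t :: real assumes "-1 < t" "t < 1"
  shows "(phi has_real_derivative (ln(1+t) - ln(1-t))) (at t)"
  unfolding phi_def using assms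
  apply (auto intro!: derivative_eq_intros)
  done

lemma psi_mono:
  fixes x y :: real assumes "0 < x" "x \<le> y" "y < 1"
  shows "phi x / x^2 \<le> phi y / y^2"
proof (rule DERIV_nonneg_imp_nondecreasing[OF assms(2)])
  fix t assume t: "x \<le> t" "t \<le> y"
  then have t1: "t < 1" "0 < t" using assms by auto
  have d: "((\<lambda>t. phi t / t^2) has_real_derivative (t * (ln (1+t) - ln (1-t)) - 2 * phi t) / t^3) (at t)"
    using t1
    apply (auto intro!: derivative_eq_intros phi_deriv)
    apply (simp add: divide_simps eval_nat_numeral)
    apply (simp add: algebra_simps)
    done
  then show "\<exists>d. ((\<lambda>t. phi t / t^2) has_real_derivative d) (at t) \<and> 0 \<le> d"
    using chi_bound[of t] t1 by (auto intro!: divide_nonneg_pos)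
qed

lemma phi_lim: "((\<lambda>y. phi y / y^2) \<longlongrightarrow> 2 * ln 2) (at_left 1)"
  unfolding phi_def by real_asymp

lemma phi_bound:
  fixes x :: real assumes "0 \<le> x" "x < 1"
  shows "phi x \<le> 2 * ln 2 * x^2"
proof (cases "x = 0")
  case True then show ?thesis by (simp add: phi_def)
next
  case False
  then have x0: "0 < x" using assms by auto
  have ev: "eventually (\<lambda>y. phi x / x^2 \<le> phi y / y^2) (at_left 1)"
    using eventually_at_left_real[OF assms(2)]
    by eventually_elim (use x0 psi_mono in auto)
  have "phi x / x^2 \<le> 2 * ln 2"
    by (rule tendsto_le[OF trivial_limit_at_left_real phi_lim tendsto_const ev])
  then show ?thesis using x0 by (simp add: divide_simps)
qed

lemma ent_bound_half:
  fixes th :: real assumes "0 \<le> th" "th \<le> 1/2"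
  shows "plogp th + plogp (1-th) + 4*ln 2*th*(1-th) \<le> 0"
proof (cases "th = 0")
  case True then show ?thesis by (simp add: plogp_def)
next
  case False
  define x where "x = 1 - 2*th"
  have x: "0 \<le> x" "x < 1" using assms False by (auto simp: x_def)
  have th: "th = (1-x)/2" "1 - th = (1+x)/2" by (auto simp: x_def)
  have p1: "plogp th = (1-x)/2 * (ln (1-x) - ln 2)"
    using x False unfolding plogp_def th(1) by (simp add: ln_div)
  have p2: "plogp (1-th) = (1+x)/2 * (ln (1+x) - ln 2)"
    using x False unfolding plogp_def th(2) by (simp add: ln_div)
  have "plogp th + plogp (1-th) + 4*ln 2*th*(1-th) = phi x / 2 - ln 2 * x^2"
    unfolding p1 p2 phi_def by (simp add: th(1) algebra_simps power2_eq_square divide_simps)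
  also have "\<dots> \<le> 0" using phi_bound[OF x] by simp
  finally show ?thesis .
qed

lemma ent_bound:
  fixes th :: real assumes "0 \<le> th" "th \<le> 1"
  shows "plogp th + plogp (1-th) + 4*ln 2*th*(1-th) \<le> 0"
proof (cases "th \<le> 1/2")
  case True then show ?thesis using ent_bound_half assms by auto
next
  case False
  then have "plogp (1-th) + plogp (1-(1-th)) + 4*ln 2*(1-th)*(1-(1-th)) \<le> 0"
    using ent_bound_half[of "1-th"] assms by auto
  then show ?thesis by (simp add: algebra_simps)
qed

lemma ln_strict: fixes z :: real assumes "0 < z" "z \<noteq> 1" shows "ln z < z - 1"
proof -
  have s: "sqrt z > 0" "sqrt z \<noteq> 1" "sqrt z * sqrt z = z" using assms by auto
  have "ln z = 2 * ln (sqrt z)" using assms by (simp add: ln_sqrt)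
  also have "\<dots> \<le> 2 * (sqrt z - 1)" using ln_le_minus_one[OF s(1)] by simp
  also have "\<dots> < z - 1"
  proof -
    have "(sqrt z - 1)^2 > 0" using s by simp
    then show ?thesis using s(3) by (simp add: power2_eq_square algebra_simps)
  qed
  finally show ?thesis .
qed

lemma ln_facts: "ln (5/4::real) = ln 5 - 2*ln 2" "ln (4/5::real) = 2*ln 2 - ln 5"
   "ln (1/5::real) = - ln 5" "ln (1/2::real) = - ln 2" "ln (4::real) = 2 * ln 2"
proof -
  have l4: "ln (4::real) = 2 * ln 2" using ln_realpow[of 2 2] by simp
  then show "ln (5/4::real) = ln 5 - 2*ln 2" "ln (4/5::real) = 2*ln 2 - ln 5" "ln (4::real) = 2 * ln 2"
    by (simp_all add: ln_div)
  show "ln (1/5::real) = - ln 5" "ln (1/2::real) = - ln 2" by (simp_all add: ln_div)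
qed

lemma gibbs45:
  fixes y :: real assumes "0 < y" "y < 1"
  shows "4*ln y + ln (1-y) \<le> 8*ln 2 - 5*ln 5"
    and "y \<noteq> 4/5 \<Longrightarrow> 4*ln y + ln (1-y) < 8*ln 2 - 5*ln 5"
proof -
  have a: "ln (5*y/4) = ln 5 + ln y - 2*ln 2" using assms by (simp add: ln_div ln_mult ln_facts)
  have b: "ln (5*(1-y)) = ln 5 + ln (1-y)" using assms by (subst ln_mult) auto
  have a1: "ln (5*y/4) \<le> 5*y/4 - 1" using assms by (intro ln_le_minus_one) auto
  have b1: "ln (5*(1-y)) \<le> 5*(1-y) - 1" using assms by (intro ln_le_minus_one) auto
  have h: "4*(5*y/4 - 1) + (5*(1-y) - 1) = 0" by (simp add: algebra_simps)
  show "4*ln y + ln (1-y) \<le> 8*ln 2 - 5*ln 5" using a b a1 b1 h by argo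
  assume "y \<noteq> 4/5"
  then have a2: "ln (5*y/4) < 5*y/4 - 1" using assms by (intro ln_strict) auto
  show "4*ln y + ln (1-y) < 8*ln 2 - 5*ln 5" using a b a2 b1 h by argo
qed

lemma gibbs_pt:
  fixes t d :: real assumes "0 \<le> t" "t \<le> 1" "0 < d" "d < 1"
  shows "t * ln d + (1-t) * ln (1-d) \<le> plogp t + plogp (1-t)"
proof -
  consider "t = 0" | "t = 1" | "0 < t \<and> t < 1" using assms by linarith
  then show ?thesis
  proof cases
    case 1 then show ?thesis using assms by (simp add: plogp_def)
  next
    case 2 then show ?thesis using assms by (simp add: plogp_def)
  next
    case 3
    have a: "ln (d/t) \<le> d/t - 1" using assms 3 by (intro ln_le_minus_one) auto
    have b: "ln ((1-d)/(1-t)) \<le> (1-d)/(1-t) - 1" using assms 3 by (intro ln_le_minus_one) auto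
    have ea: "t * (d/t - 1) = d - t" using 3 by (simp add: field_simps)
    have eb: "(1-t) * ((1-d)/(1-t) - 1) = t - d" using 3 by (simp add: field_simps)
    have a': "t * ln (d/t) \<le> d - t" using mult_left_mono[OF a, of t] 3 ea by simp
    have b': "(1-t) * ln ((1-d)/(1-t)) \<le> t - d" using mult_left_mono[OF b, of "1-t"] 3 eb by simp
    have "t * ln (d/t) = t * ln d - t * ln t" using 3 assms by (simp add: ln_div algebra_simps)
    moreover have "(1-t) * ln ((1-d)/(1-t)) = (1-t) * ln (1-d) - (1-t) * ln (1-t)"
      using 3 assms by (simp add: ln_div algebra_simps)
    ultimately show ?thesis using a' b' 3 by (simp add: plogp_def)
  qed
qed

definition rr :: "real \<Rightarrow> real \<Rightarrow> real \<Rightarrow> real" where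
  "rr d0 d1 th = - bin_entropy th + th^2 * ln (1/d1) + th*(1-th)*ln(1/(1-d1))
     + th*(1-th)*ln(1/d0) + (1-th)^2*ln(1/(1-d0))"

lemma KL_interior:
  assumes "0 < d0" "d0 < 1" "0 < d1" "d1 < 1"
  shows "KL_risk (d0,d1) th = ereal (rr d0 d1 th)"
  using assms by (simp add: KL_risk_def rr_def xlog_def)

lemma rr_nonneg:
  assumes "0 < d0" "d0 < 1" "0 < d1" "d1 < 1" "0 \<le> th" "th \<le> 1"
  shows "0 \<le> rr d0 d1 th"
proof -
  have g1: "th * ln d1 + (1-th) * ln (1-d1) \<le> plogp th + plogp (1-th)"
    using gibbs_pt assms by auto
  have g0: "th * ln d0 + (1-th) * ln (1-d0) \<le> plogp th + plogp (1-th)"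
    using gibbs_pt assms by auto
  have "rr d0 d1 th = th * (plogp th + plogp (1-th) - (th * ln d1 + (1-th) * ln (1-d1)))
      + (1-th) * (plogp th + plogp (1-th) - (th * ln d0 + (1-th) * ln (1-d0)))"
    using assms by (simp add: rr_def bin_entropy_def ln_div algebra_simps power2_eq_square)
  also have "\<dots> \<ge> 0" using g0 g1 assms by (intro add_nonneg_nonneg mult_nonneg_nonneg) auto
  finally show ?thesis .
qed

lemma rr_star:
  assumes "0 \<le> th" "th \<le> 1"
  shows "rr (1/5) (4/5) th \<le> ln 5 - 2 * ln 2"
proof -
  have e: "rr (1/5) (4/5) th = plogp th + plogp (1-th) + 4*ln 2*th*(1-th) + (ln 5 - 2 * ln 2)"
    by (simp add: rr_def bin_entropy_def ln_facts algebra_simps power2_eq_square)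
  show ?thesis unfolding e using ent_bound[OF assms] by simp
qed

lemma xlog_0: "c \<noteq> 0 \<Longrightarrow> xlog c 0 = \<infinity>" by (simp add: xlog_def)

lemma three_pt:
  assumes "\<delta> \<in> decisions" "KL_risk \<delta> 0 \<le> ereal M" "KL_risk \<delta> (1/2) \<le> ereal M"
    "KL_risk \<delta> 1 \<le> ereal M"
  shows "ln 5 - 2 * ln 2 \<le> M" and "\<delta> \<noteq> (1/5, 4/5) \<Longrightarrow> ln 5 - 2 * ln 2 < M"
proof -
  obtain d0 d1 where dd: "\<delta> = (d0, d1)" by (cases \<delta>)
  have b: "0 \<le> d0" "d0 \<le> 1" "0 \<le> d1" "d1 \<le> 1" using assms(1) dd by (auto simp: decisions_def)
  have R0: "KL_risk (d0,d1) 0 = xlog 1 (1-d0)"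
    by (simp add: KL_risk_def bin_entropy_def plogp_def xlog_def)
  have R1: "KL_risk (d0,d1) 1 = xlog 1 d1"
    by (simp add: KL_risk_def bin_entropy_def plogp_def xlog_def)
  have "d0 \<noteq> 1" using assms(2) unfolding dd R0 by (auto simp: xlog_def)
  moreover have "d1 \<noteq> 0" using assms(4) unfolding dd R1 by (auto simp: xlog_def)
  moreover have "d1 \<noteq> 1"
  proof
    assume "d1 = 1" then have "KL_risk \<delta> (1/2) = \<infinity>" unfolding dd by (simp add: KL_risk_def xlog_0)
    then show False using assms(3) by simp
  qed
  moreover have "d0 \<noteq> 0"
  proof
    assume "d0 = 0" then have "KL_risk \<delta> (1/2) = \<infinity>" unfolding dd by (simp add: KL_risk_def xlog_0)
    then show False using assms(3) by simp
  qed
  ultimately have i: "0 < d0" "d0 < 1" "0 < d1" "d1 < 1" using b by auto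
  have r0: "rr d0 d1 0 \<le> M" and rh: "rr d0 d1 (1/2) \<le> M" and r1: "rr d0 d1 1 \<le> M"
    using assms(2-4) unfolding dd KL_interior[OF i] by auto
  have e0: "rr d0 d1 0 = - ln (1-d0)" using i by (simp add: rr_def bin_entropy_def plogp_def ln_div)
  have e1: "rr d0 d1 1 = - ln d1" using i by (simp add: rr_def bin_entropy_def plogp_def ln_div)
  have eh: "rr d0 d1 (1/2) = - ln 2 - (ln d1 + ln (1-d1) + ln d0 + ln (1-d0))/4"
    using i by (simp add: rr_def bin_entropy_def plogp_def ln_div ln_facts power2_eq_square algebra_simps)
  have comb: "3/10 * rr d0 d1 0 + 2/5 * rr d0 d1 (1/2) + 3/10 * rr d0 d1 1
     = -2/5 * ln 2 - (4 * ln d1 + ln (1-d1))/10 - (4 * ln (1-d0) + ln d0)/10"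
    unfolding e0 e1 eh by argo
  have cM: "3/10 * rr d0 d1 0 + 2/5 * rr d0 d1 (1/2) + 3/10 * rr d0 d1 1 \<le> M"
    using r0 r1 rh by linarith
  have g1: "4 * ln d1 + ln (1-d1) \<le> 8*ln 2 - 5*ln 5" using gibbs45 i by auto
  have g0: "4 * ln (1-d0) + ln d0 \<le> 8*ln 2 - 5*ln 5" using gibbs45[of "1-d0"] i by auto
  show "ln 5 - 2 * ln 2 \<le> M" using comb cM g1 g0 by argo
  assume "\<delta> \<noteq> (1/5, 4/5)"
  then have "d1 \<noteq> 4/5 \<or> 1 - d0 \<noteq> 4/5" using dd by auto
  then have "4 * ln d1 + ln (1-d1) + (4 * ln (1-d0) + ln d0) < 2 * (8*ln 2 - 5*ln 5)"
  proof
    assume "d1 \<noteq> 4/5" then show ?thesis using gibbs45(2)[of d1] g0 i by argo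
  next
    assume "1 - d0 \<noteq> 4/5" then have "4 * ln (1-d0) + ln d0 < 8*ln 2 - 5*ln 5"
      using gibbs45(2)[of "1-d0"] i by auto
    then show ?thesis using g1 by argo
  qed
  then show "ln 5 - 2 * ln 2 < M" using comb cM by argo
qed

lemma max_risk_star: "max_risk (1/5, 4/5) \<le> ereal (ln 5 - 2 * ln 2)"
  unfolding max_risk_def
proof (rule SUP_least)
  fix th :: real assume "th \<in> {0..1}"
  then show "KL_risk (1/5, 4/5) th \<le> ereal (ln 5 - 2 * ln 2)"
    using KL_interior[of "1/5" "4/5" th] rr_star[of th] by auto
qed

lemma max_risk_lb:
  assumes "\<delta> \<in> decisions" shows "ereal (ln 5 - 2 * ln 2) \<le> max_risk \<delta>"
proof (rule ccontr)
  assume "\<not> ?thesis"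
  then have "max_risk \<delta> < ereal (ln 5 - 2 * ln 2)" by simp
  then obtain M where M0: "max_risk \<delta> < ereal M" "ereal M < ereal (ln 5 - 2 * ln 2)"
    using ereal_dense2 by blast
  then have M: "max_risk \<delta> < ereal M" "M < ln 5 - 2 * ln 2" by auto
  have "KL_risk \<delta> t \<le> ereal M" if "t \<in> {0..1}" for t
  proof -
    have "KL_risk \<delta> t \<le> max_risk \<delta>" unfolding max_risk_def using that by (rule SUP_upper)
    then show ?thesis using M(1) by simp
  qed
  then have "ln 5 - 2 * ln 2 \<le> M" using three_pt(1)[OF assms] by auto
  then show False using M(2) by simp
qed

lemma minimax_star: "is_minimax (1/5, 4/5)"
proof -
  have "(1/5::real, 4/5::real) \<in> decisions" by (simp add: decisions_def)
  moreover have "\<forall>\<delta>'\<in>decisions. max_risk (1/5, 4/5) \<le> max_risk \<delta>'"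
  proof
    fix \<delta>' assume "\<delta>' \<in> decisions"
    from max_risk_lb[OF this] show "max_risk (1/5, 4/5) \<le> max_risk \<delta>'"
      using max_risk_star by (rule order.trans[rotated])
  qed
  ultimately show ?thesis unfolding is_minimax_def by blast
qed

lemma minimax_unique: assumes "is_minimax \<delta>" shows "\<delta> = (1/5, 4/5)"
proof (rule ccontr)
  assume ne: "\<delta> \<noteq> (1/5, 4/5)"
  have d: "\<delta> \<in> decisions" using assms by (simp add: is_minimax_def)
  have "max_risk \<delta> \<le> max_risk (1/5, 4/5)" using assms by (auto simp: is_minimax_def decisions_def)
  then have m: "max_risk \<delta> \<le> ereal (ln 5 - 2 * ln 2)" using max_risk_star by simp
  have "KL_risk \<delta> t \<le> ereal (ln 5 - 2 * ln 2)" if "t \<in> {0..1}" for t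
  proof -
    have "KL_risk \<delta> t \<le> max_risk \<delta>" unfolding max_risk_def using that by (rule SUP_upper)
    then show ?thesis using m by simp
  qed
  then have "ln 5 - 2 * ln 2 < ln 5 - 2 * (ln 2 :: real)"
    using three_pt(2)[OF d _ _ _ ne, of "ln 5 - 2 * ln 2"] by auto
  then show False by simp
qed

lemma plogp_eq: "plogp = (\<lambda>x. x * ln x)"
  by (rule ext) (simp add: plogp_def)

lemma plogp_bounds: assumes "0 \<le> t" "t \<le> 1" shows "-1 \<le> plogp t" "plogp t \<le> 0"
proof -
  show "plogp t \<le> 0" using assms by (simp add: plogp_def mult_nonneg_nonpos)
  show "-1 \<le> plogp t"
  proof (cases "t = 0")
    case False
    then have t: "0 < t" using assms by simp
    have "ln (1/t) \<le> 1/t - 1" using t by (intro ln_le_minus_one) auto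
    then have "- ln t \<le> 1/t - 1" using t by (simp add: ln_div)
    then have "t * (- ln t) \<le> t * (1/t - 1)" using t by (intro mult_left_mono) auto
    then show ?thesis using t assms by (simp add: plogp_def algebra_simps)
  qed (simp add: plogp_def)
qed

lemma bin_entropy_meas[measurable]: "bin_entropy \<in> borel_measurable borel"
  unfolding bin_entropy_def[abs_def] plogp_eq by measurable

lemma bin_entropy_bound: assumes "0 \<le> t" "t \<le> 1" shows "\<bar>bin_entropy t\<bar> \<le> 2"
  using plogp_bounds[of t] plogp_bounds[of "1-t"] assms unfolding bin_entropy_def by auto

locale prior =
  fixes pi :: "real measure"
  assumes P: "prob_space pi" and S: "sets pi = sets borel" and E: "emeasure pi {0..1} = 1"
begin

sublocale prob_space pi by (rule P)

lemma meas: "(f :: real \<Rightarrow> real) \<in> borel_measurable borel \<Longrightarrow> f \<in> borel_measurable pi"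
  using measurable_cong_sets[OF S refl, where N=borel] by blast

lemma sets01: "A \<in> sets borel \<Longrightarrow> A \<in> sets pi" using S by simp

lemma AE01: "AE x in pi. x \<in> {0..1}"
proof (rule AE_prob_1)
  show "prob {0..1} = 1" using E by (simp add: measure_def)
qed

lemma intb:
  assumes "f \<in> borel_measurable borel" "\<And>x. x \<in> {0..1} \<Longrightarrow> \<bar>f x\<bar> \<le> (B::real)"
  shows "integrable pi f"
proof (rule integrable_const_bound[where B=B])
  show "AE x in pi. norm (f x) \<le> B" using AE01 by eventually_elim (use assms in auto)
  show "f \<in> borel_measurable pi" using meas[OF assms(1)] .
qed

lemma int_id: "integrable pi (\<lambda>x. x)" by (rule intb[where B=1]) auto
lemma int_sq: "integrable pi (\<lambda>x. x^2)" by (rule intb[where B=1]) (auto simp: power_le_one abs_le_iff)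
lemma int_be: "integrable pi bin_entropy" by (rule intb[where B=2]) (auto intro: bin_entropy_bound)

definition "Eb = (\<integral>x. bin_entropy x \<partial>pi)"
definition "m1 = (\<integral>x. x \<partial>pi)"
definition "m2 = (\<integral>x. x^2 \<partial>pi)"

lemma lin: "(\<integral>x. - bin_entropy x + a2 * x^2 + a1 * x + a0 \<partial>pi) = - Eb + a2 * m2 + a1 * m1 + a0"
proof -
  have i1: "integrable pi (\<lambda>x. - bin_entropy x)" using int_be by simp
  have i2: "integrable pi (\<lambda>x. a2 * x^2)" using int_sq by simp
  have i3: "integrable pi (\<lambda>x. a1 * x)" using int_id by simp
  have "(\<integral>x. - bin_entropy x + a2 * x^2 + a1 * x + a0 \<partial>pi)
     = (\<integral>x. - bin_entropy x + a2 * x^2 + a1 * x \<partial>pi) + (\<integral>x. a0 \<partial>pi)"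
    using i1 i2 i3 by (intro Bochner_Integration.integral_add) auto
  also have "(\<integral>x. - bin_entropy x + a2 * x^2 + a1 * x \<partial>pi)
     = (\<integral>x. - bin_entropy x + a2 * x^2 \<partial>pi) + (\<integral>x. a1 * x \<partial>pi)"
    using i1 i2 i3 by (intro Bochner_Integration.integral_add) auto
  also have "(\<integral>x. - bin_entropy x + a2 * x^2 \<partial>pi)
     = (\<integral>x. - bin_entropy x \<partial>pi) + (\<integral>x. a2 * x^2 \<partial>pi)"
    using i1 i2 by (intro Bochner_Integration.integral_add) auto
  finally show ?thesis by (simp add: Eb_def m1_def m2_def prob_space)
qed

definition V :: "real \<Rightarrow> real \<Rightarrow> real" where
  "V d0 d1 = - Eb - m2 * ln d1 - (m1 - m2) * ln (1 - d1) - (m1 - m2) * ln d0 - (1 - 2*m1 + m2) * ln (1-d0)"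

lemma bayes_int:
  assumes i: "0 < d0" "d0 < 1" "0 < d1" "d1 < 1"
  shows "bayes_risk pi (d0,d1) = ennreal (V d0 d1)" "0 \<le> V d0 d1"
proof -
  have meas_rr: "rr d0 d1 \<in> borel_measurable borel"
    unfolding rr_def[abs_def] by measurable
  have int_rr: "integrable pi (rr d0 d1)"
  proof (rule intb[OF meas_rr])
    fix x :: real assume x: "x \<in> {0..1}"
    have "\<bar>rr d0 d1 x\<bar> \<le> 2 + \<bar>ln (1/d1)\<bar> + \<bar>ln (1/(1-d1))\<bar> + \<bar>ln (1/d0)\<bar> + \<bar>ln (1/(1-d0))\<bar>"
    proof -
      have a: "\<bar>x^2\<bar> \<le> 1" "\<bar>x*(1-x)\<bar> \<le> 1" "\<bar>(1-x)^2\<bar> \<le> 1" using x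
        by (auto simp: abs_le_iff power_le_one mult_le_one)
      have "\<bar>x^2 * ln (1/d1)\<bar> \<le> \<bar>ln (1/d1)\<bar>" using a(1) by (simp add: abs_mult mult_left_le_one_le)
      moreover have "\<bar>x*(1-x) * ln (1/(1-d1))\<bar> \<le> \<bar>ln (1/(1-d1))\<bar>" using a(2) by (simp add: abs_mult mult_left_le_one_le)
      moreover have "\<bar>x*(1-x) * ln (1/d0)\<bar> \<le> \<bar>ln (1/d0)\<bar>" using a(2) by (simp add: abs_mult mult_left_le_one_le)
      moreover have "\<bar>(1-x)^2 * ln (1/(1-d0))\<bar> \<le> \<bar>ln (1/(1-d0))\<bar>" using a(3) by (simp add: abs_mult mult_left_le_one_le)
      moreover have "\<bar>bin_entropy x\<bar> \<le> 2" using x bin_entropy_bound by auto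
      ultimately show ?thesis unfolding rr_def by linarith
    qed
    then show "\<bar>rr d0 d1 x\<bar> \<le> 2 + \<bar>ln (1/d1)\<bar> + \<bar>ln (1/(1-d1))\<bar> + \<bar>ln (1/d0)\<bar> + \<bar>ln (1/(1-d0))\<bar>" .
  qed
  have "bayes_risk pi (d0,d1) = (\<integral>\<^sup>+ x. ennreal (rr d0 d1 x) \<partial>pi)"
    unfolding bayes_risk_def
    by (rule nn_integral_cong_AE, use AE01 in eventually_elim) (auto simp: KL_interior[OF i])
  also have "\<dots> = ennreal (\<integral>x. rr d0 d1 x \<partial>pi)"
    by (rule nn_integral_eq_integral[OF int_rr], use AE01 in eventually_elim) (use rr_nonneg i in auto)
  also have "(\<integral>x. rr d0 d1 x \<partial>pi) = V d0 d1"
  proof -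
    have "(\<integral>x. rr d0 d1 x \<partial>pi) = (\<integral>x. - bin_entropy x + (ln (1/d1) - (ln (1/(1-d1)) + ln (1/d0)) + ln (1/(1-d0))) * x^2
        + ((ln (1/(1-d1)) + ln (1/d0)) - 2 * ln (1/(1-d0))) * x + ln (1/(1-d0)) \<partial>pi)"
      by (rule Bochner_Integration.integral_cong) (auto simp: rr_def algebra_simps power2_eq_square)
    also have "\<dots> = V d0 d1" unfolding lin using i by (simp add: V_def ln_div algebra_simps)
    finally show ?thesis .
  qed
  finally show "bayes_risk pi (d0,d1) = ennreal (V d0 d1)" .
  have "0 \<le> (\<integral>x. rr d0 d1 x \<partial>pi)"
    by (rule integral_nonneg_AE, use AE01 in eventually_elim) (use rr_nonneg i in auto)
  then show "0 \<le> V d0 d1" using \<open>(\<integral>x. rr d0 d1 x \<partial>pi) = V d0 d1\<close> by simp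
qed

end



context prior begin

lemma bayes_top_aux:
  assumes "A \<in> sets borel" "A \<subseteq> {0..1}" "emeasure pi A \<noteq> 0"
    "\<And>x. x \<in> A \<Longrightarrow> KL_risk \<delta> x = \<infinity>"
  shows "bayes_risk pi \<delta> = top"
proof -
  have "(\<integral>\<^sup>+ x. top * indicator A x \<partial>pi) \<le> bayes_risk pi \<delta>"
    unfolding bayes_risk_def
    by (rule nn_integral_mono) (use assms(2,4) in \<open>auto simp: indicator_def\<close>)
  moreover have "(\<integral>\<^sup>+ x. top * indicator A x \<partial>pi) = top"
    using nn_integral_cmult_indicator[OF sets01[OF assms(1)], of top] assms(3)
    by (simp add: ennreal_top_mult)
  ultimately show ?thesis by (simp add: top_unique)
qed

lemma null_AE: assumes "A \<in> sets borel" "emeasure pi A = 0" shows "AE x in pi. x \<notin> A"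
  using AE_not_in[of A pi] assms sets01 by (auto simp: null_sets_def)

lemma m1_pos_meas: assumes "m1 \<noteq> 0" shows "emeasure pi {0<..1} \<noteq> 0"
proof
  assume "emeasure pi {0<..1} = 0"
  then have "AE x in pi. x \<notin> {0<..1}" by (intro null_AE) auto
  then have "AE x in pi. x = 0" using AE01 by eventually_elim auto
  then have "m1 = (\<integral>x. 0 \<partial>pi)" unfolding m1_def
    by (intro integral_cong_AE) (auto intro: meas)
  then show False using assms by simp
qed

lemma m12_meas: assumes "m1 \<noteq> m2" shows "emeasure pi {0<..<1} \<noteq> 0"
proof
  assume "emeasure pi {0<..<1} = 0"
  then have "AE x in pi. x \<notin> {0<..<1}" by (intro null_AE) auto
  then have "AE x in pi. x^2 = x" using AE01 by eventually_elim (auto simp: power2_eq_square)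
  then have "m2 = m1" unfolding m1_def m2_def
    by (intro integral_cong_AE) (auto intro: meas)
  then show False using assms by simp
qed

lemma m1_one_meas: assumes "m1 \<noteq> 1" shows "emeasure pi {0..<1} \<noteq> 0"
proof
  assume "emeasure pi {0..<1} = 0"
  then have "AE x in pi. x \<notin> {0..<1}" by (intro null_AE) auto
  then have "AE x in pi. x = 1" using AE01 by eventually_elim auto
  then have "m1 = (\<integral>x. 1 \<partial>pi)" unfolding m1_def
    by (intro integral_cong_AE) (auto intro: meas)
  then show False using assms by (simp add: prob_space)
qed

lemma bayes_star:
  assumes "m1 = 1/2" "m2 = 2/5"
  shows "is_bayes pi (1/5, 4/5)"
  unfolding is_bayes_def
proof (intro conjI ballI)
  show "(1/5::real, 4/5::real) \<in> decisions" by (simp add: decisions_def)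
  fix \<delta>' assume d: "\<delta>' \<in> decisions"
  obtain d0 d1 where dd: "\<delta>' = (d0, d1)" by (cases \<delta>')
  have b: "0 \<le> d0" "d0 \<le> 1" "0 \<le> d1" "d1 \<le> 1" using d dd by (auto simp: decisions_def)
  have Vf: "V d0 d1 = - Eb - (4 * ln d1 + ln (1 - d1))/10 - (4 * ln (1-d0) + ln d0)/10" for d0 d1
    unfolding V_def assms by (simp add: algebra_simps) argo
  have Vs: "V (1/5) (4/5) = - Eb - 2 * (8*ln 2 - 5*ln 5)/10"
    unfolding Vf by (simp add: ln_facts)
  show "bayes_risk pi (1/5, 4/5) \<le> bayes_risk pi \<delta>'"
  proof (cases "0 < d0 \<and> d0 < 1 \<and> 0 < d1 \<and> d1 < 1")
    case True
    then have i: "0 < d0" "d0 < 1" "0 < d1" "d1 < 1" by auto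
    have g1: "4 * ln d1 + ln (1-d1) \<le> 8*ln 2 - 5*ln 5" using gibbs45 i by auto
    have g0: "4 * ln (1-d0) + ln d0 \<le> 8*ln 2 - 5*ln 5" using gibbs45[of "1-d0"] i by auto
    have "V (1/5) (4/5) \<le> V d0 d1" using Vs Vf[of d0 d1] g0 g1 by argo
    then show ?thesis unfolding dd using bayes_int[OF i] bayes_int[of "1/5" "4/5"]
      by (simp add: ennreal_leI)
  next
    case False
    have "bayes_risk pi \<delta>' = top"
    proof -
      consider "d1 = 0" | "d1 = 1" | "d0 = 0" | "d0 = 1" using False b by linarith
      then show ?thesis
      proof cases
        case 1
        show ?thesis
        proof (rule bayes_top_aux[of "{0<..1}"])
          show "emeasure pi {0<..1} \<noteq> 0" using m1_pos_meas assms by simp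
          fix x :: real assume "x \<in> {0<..1}"
          then show "KL_risk \<delta>' x = \<infinity>" unfolding dd 1 by (simp add: KL_risk_def xlog_0)
        qed auto
      next
        case 2
        show ?thesis
        proof (rule bayes_top_aux[of "{0<..<1}"])
          show "emeasure pi {0<..<1} \<noteq> 0" using m12_meas assms by simp
          fix x :: real assume "x \<in> {0<..<1}"
          then show "KL_risk \<delta>' x = \<infinity>" unfolding dd 2 by (simp add: KL_risk_def xlog_0)
        qed auto
      next
        case 3
        show ?thesis
        proof (rule bayes_top_aux[of "{0<..<1}"])
          show "emeasure pi {0<..<1} \<noteq> 0" using m12_meas assms by simp
          fix x :: real assume "x \<in> {0<..<1}"
          then show "KL_risk \<delta>' x = \<infinity>" unfolding dd 3 by (simp add: KL_risk_def xlog_0)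
        qed auto
      next
        case 4
        show ?thesis
        proof (rule bayes_top_aux[of "{0..<1}"])
          show "emeasure pi {0..<1} \<noteq> 0" using m1_one_meas assms by simp
          fix x :: real assume "x \<in> {0..<1}"
          then show "KL_risk \<delta>' x = \<infinity>" unfolding dd 4 by (simp add: KL_risk_def xlog_0)
        qed auto
      qed
    qed
    then show ?thesis by simp
  qed
qed

lemma bayes_moments:
  assumes "is_bayes pi (1/5, 4/5)"
  shows "m1 = 1/2" "m2 = 2/5"
proof -
  have le: "V (1/5) (4/5) \<le> V d0 d1" if "0 < d0" "d0 < 1" "0 < d1" "d1 < 1" for d0 d1
  proof -
    have "(d0, d1) \<in> decisions" using that by (simp add: decisions_def)
    then have "bayes_risk pi (1/5, 4/5) \<le> bayes_risk pi (d0, d1)" using assms by (auto simp: is_bayes_def)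
    then show ?thesis using bayes_int[OF that] bayes_int[of "1/5" "4/5"] by (simp add: ennreal_le_iff)
  qed
  define g where "g t = - m2 * ln t - (m1 - m2) * ln (1 - t)" for t
  define h where "h t = - (m1 - m2) * ln t - (1 - 2*m1 + m2) * ln (1 - t)" for t
  have g: "g (4/5) \<le> g y" if "\<bar>4/5 - y\<bar> < 1/5" for y
  proof -
    have "0 < y" "y < 1" using that abs_less_iff[of "4/5 - y" "1/5"] by linarith+
    then have "V (1/5) (4/5) \<le> V (1/5) y" using le by auto
    then show ?thesis unfolding V_def g_def by simp
  qed
  have h: "h (1/5) \<le> h y" if "\<bar>1/5 - y\<bar> < 1/5" for y
  proof -
    have "0 < y" "y < 1" using that abs_less_iff[of "1/5 - y" "1/5"] by linarith+
    then have "V (1/5) (4/5) \<le> V y (4/5)" using le by auto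
    then show ?thesis unfolding V_def h_def by (simp add: algebra_simps)
  qed
  have dg: "(g has_real_derivative (- m2 / (4/5) + (m1 - m2) / (1 - 4/5))) (at (4/5))"
    unfolding g_def[abs_def] by (auto intro!: derivative_eq_intros)
  have dh: "(h has_real_derivative (- (m1 - m2) / (1/5) + (1 - 2*m1 + m2) / (1 - 1/5))) (at (1/5))"
    unfolding h_def[abs_def] by (auto intro!: derivative_eq_intros)
  have e1: "- m2 / (4/5) + (m1 - m2) / (1 - 4/5) = 0"
    by (rule DERIV_local_min[OF dg, of "1/5"]) (use g in auto)
  have e2: "- (m1 - m2) / (1/5) + (1 - 2*m1 + m2) / (1 - 1/5) = 0"
    by (rule DERIV_local_min[OF dh, of "1/5"]) (use h in auto)
  show "m1 = 1/2" "m2 = 2/5" using e1 e2 by (simp_all add: field_simps)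
qed

end

theorem corollary1:
  fixes \<pi> :: "real measure"
  assumes "prob_space \<pi>" and "sets \<pi> = sets borel" and "emeasure \<pi> {0..1} = 1"
  shows "minimax_prior \<pi> \<longleftrightarrow>
           (\<integral>\<theta>. \<theta> \<partial>\<pi>) = 1/2 \<and> (\<integral>\<theta>. \<theta>\<^sup>2 \<partial>\<pi>) = 2/5"
proof -
  interpret prior \<pi> by (rule prior.intro[OF assms])
  show ?thesis
  proof
    assume "minimax_prior \<pi>"
    then obtain \<delta> where "is_bayes \<pi> \<delta>" "is_minimax \<delta>" unfolding minimax_prior_def by blast
    then have "is_bayes \<pi> (1/5, 4/5)" using minimax_unique by simp
    then show "(\<integral>\<theta>. \<theta> \<partial>\<pi>) = 1/2 \<and> (\<integral>\<theta>. \<theta>\<^sup>2 \<partial>\<pi>) = 2/5"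
      using bayes_moments unfolding m1_def m2_def by auto
  next
    assume "(\<integral>\<theta>. \<theta> \<partial>\<pi>) = 1/2 \<and> (\<integral>\<theta>. \<theta>\<^sup>2 \<partial>\<pi>) = 2/5"
    then have "is_bayes \<pi> (1/5, 4/5)" using bayes_star unfolding m1_def m2_def by auto
    then show "minimax_prior \<pi>" unfolding minimax_prior_def using minimax_star by blast
  qed
qed

end
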